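(* A maximal ideal $M$ of $B_1(\mathbb{R})$ is real if and only if it is fixed, i.e. if and only if $M=\{f\in B_1(\mathbb{R}): f(p)=0\}$ for some $p\in\mathbb{R}$.
   Context: $B_1(\mathbb{R})$ denotes the ring (pointwise operations and order) of Baire one functions $\mathbb{R}\to\mathbb{R}$, i.e. pointwise limits of sequences of continuous functions. For $f$, $Z(f)=\{x: f(x)=0\}$. A proper ideal $I$ is fixed if $\bigcap_{f\in I}Z(f)\neq\emptyset$. For a maximal ideal $M$, $M(f)=f+M$, and $\Phi:\mathbb{R}\to B_1(\mathbb{R})/M$, $\Phi(r)=M(\mathbf r)$ ($\mathbf r$ the constant function $r$); $M$ is real if $\Phi$ is surjective. *)

theory Defs
  imports "HOL-Analysis.Analysis" "HOL-Algebra.Algebra"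
begin

definition baire_one :: "(real \<Rightarrow> real) set" where
  "baire_one = {f. \<exists>g :: nat \<Rightarrow> real \<Rightarrow> real.
      (\<forall>n. continuous_on UNIV (g n)) \<and> (\<forall>x. (\<lambda>n. g n x) \<longlonglongrightarrow> f x)}"

definition B1 :: "(real \<Rightarrow> real) ring" where
  "B1 = \<lparr> carrier = baire_one,
          mult = (\<lambda>f g x. f x * g x),
          one = (\<lambda>x. 1),
          ring.zero = (\<lambda>x. 0),
          ring.add = (\<lambda>f g x. f x + g x) \<rparr>"

definition zero_set :: "(real \<Rightarrow> real) \<Rightarrow> real set" where
  "zero_set f = {x. f x = 0}"

definition fixed_ideal :: "(real \<Rightarrow> real) set \<Rightarrow> bool" where
  "fixed_ideal I \<longleftrightarrow> (\<Inter>f\<in>I. zero_set f) \<noteq> {}"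

definition Phi :: "(real \<Rightarrow> real) set \<Rightarrow> real \<Rightarrow> (real \<Rightarrow> real) set" where
  "Phi M r = M +>\<^bsub>B1\<^esub> (\<lambda>x. r)"

definition real_ideal :: "(real \<Rightarrow> real) set \<Rightarrow> bool" where
  "real_ideal M \<longleftrightarrow> Phi M ` UNIV = carrier (B1 Quot M)"

end

theory Submission
  imports Defs
begin

lemma B1_simps [simp]:
  "carrier B1 = baire_one" "mult B1 = (\<lambda>f g x. f x * g x)" "one B1 = (\<lambda>x. 1)"
  "ring.zero B1 = (\<lambda>x. 0)" "ring.add B1 = (\<lambda>f g x. f x + g x)"
  by (simp_all add: B1_def)

lemma const_b1: "(\<lambda>x. c) \<in> baire_one"
  unfolding baire_one_def by (rule CollectI, rule exI[of _ "\<lambda>n x. c"]) auto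

lemma id_b1: "(\<lambda>x. x) \<in> baire_one"
  unfolding baire_one_def by (rule CollectI, rule exI[of _ "\<lambda>n x. x"]) auto

lemma add_b1: "f \<in> baire_one \<Longrightarrow> g \<in> baire_one \<Longrightarrow> (\<lambda>x. f x + g x) \<in> baire_one"
  unfolding baire_one_def
proof (clarify)
  fix a b :: "nat \<Rightarrow> real \<Rightarrow> real"
  assume "\<forall>n. continuous_on UNIV (a n)" "\<forall>x. (\<lambda>n. a n x) \<longlonglongrightarrow> f x"
    "\<forall>n. continuous_on UNIV (b n)" "\<forall>x. (\<lambda>n. b n x) \<longlonglongrightarrow> g x"
  then show "\<exists>h. (\<forall>n. continuous_on UNIV (h n)) \<and> (\<forall>x. (\<lambda>n. h n x) \<longlonglongrightarrow> f x + g x)"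
    by (intro exI[of _ "\<lambda>n x. a n x + b n x"]) (auto intro: continuous_intros tendsto_intros)
qed

lemma mult_b1: "f \<in> baire_one \<Longrightarrow> g \<in> baire_one \<Longrightarrow> (\<lambda>x. f x * g x) \<in> baire_one"
  unfolding baire_one_def
proof (clarify)
  fix a b :: "nat \<Rightarrow> real \<Rightarrow> real"
  assume "\<forall>n. continuous_on UNIV (a n)" "\<forall>x. (\<lambda>n. a n x) \<longlonglongrightarrow> f x"
    "\<forall>n. continuous_on UNIV (b n)" "\<forall>x. (\<lambda>n. b n x) \<longlonglongrightarrow> g x"
  then show "\<exists>h. (\<forall>n. continuous_on UNIV (h n)) \<and> (\<forall>x. (\<lambda>n. h n x) \<longlonglongrightarrow> f x * g x)"
    by (intro exI[of _ "\<lambda>n x. a n x * b n x"]) (auto intro: continuous_intros tendsto_intros)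
qed

lemma neg_b1: "f \<in> baire_one \<Longrightarrow> (\<lambda>x. - f x) \<in> baire_one"
  using mult_b1[OF const_b1[of "-1"], of f] by simp

lemma inv_b1:
  assumes "h \<in> baire_one" "\<And>x. h x \<noteq> 0"
  shows "(\<lambda>x. 1 / h x) \<in> baire_one"
proof -
  obtain a :: "nat \<Rightarrow> real \<Rightarrow> real" where a: "\<forall>n. continuous_on UNIV (a n)" "\<forall>x. (\<lambda>n. a n x) \<longlonglongrightarrow> h x"
    using assms(1) unfolding baire_one_def by blast
  have c: "continuous_on UNIV (\<lambda>x. a n x / ((a n x)^2 + 1 / (real n + 1)))" for n
  proof -
    have "(a n x)^2 + 1 / (real n + 1) > 0" for x
      by (intro add_nonneg_pos) auto
    then show ?thesis using a(1) by (intro continuous_intros) (auto simp: less_imp_neq[symmetric])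
  qed
  have l: "(\<lambda>n. a n x / ((a n x)^2 + 1 / (real n + 1))) \<longlonglongrightarrow> 1 / h x" for x
  proof -
    have "(\<lambda>n. 1 / (real n + 1)) \<longlonglongrightarrow> 0" using LIMSEQ_inverse_real_of_nat by (simp add: inverse_eq_divide add.commute)
    then have "(\<lambda>n. a n x / ((a n x)^2 + 1 / (real n + 1))) \<longlonglongrightarrow> h x / ((h x)^2 + 0)"
      using a(2) assms(2)[of x] by (intro tendsto_intros) auto
    then show ?thesis using assms(2)[of x] by (simp add: power2_eq_square)
  qed
  show ?thesis unfolding baire_one_def
    by (rule CollectI, rule exI[of _ "\<lambda>n x. a n x / ((a n x)^2 + 1 / (real n + 1))"]) (use c l in auto)
qed

theorem mainTheorem20:
  assumes "maximalideal M B1"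
  shows "(real_ideal M \<longleftrightarrow> fixed_ideal M)
       \<and> (fixed_ideal M \<longleftrightarrow> (\<exists>p::real. M = {f \<in> baire_one. f p = 0}))"
proof -
  interpret maximalideal M B1 by (rule assms)
  have Msub: "M \<subseteq> baire_one" using a_subset by simp
  have zM: "(\<lambda>x. 0) \<in> M" using additive_subgroup.zero_closed[OF is_additive_subgroup] by simp
  have Mlc: "\<And>a x. a \<in> M \<Longrightarrow> x \<in> baire_one \<Longrightarrow> (\<lambda>t. x t * a t) \<in> M"
    using I_l_closed by simp
  have Mac: "\<And>a b. a \<in> M \<Longrightarrow> b \<in> M \<Longrightarrow> (\<lambda>t. a t + b t) \<in> M"
    using additive_subgroup.a_closed[OF is_additive_subgroup] by simp
  have notone: "(\<lambda>x. 1) \<notin> M" using one_imp_carrier I_notcarr by auto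
  have cos: "\<And>a. M +>\<^bsub>B1\<^esub> a = (\<Union>h\<in>M. {\<lambda>x. h x + a x})"
    by (simp add: a_r_coset_def')
  have quot: "carrier (B1 Quot M) = (\<Union>a\<in>baire_one. {M +>\<^bsub>B1\<^esub> a})"
    by (simp add: FactRing_def A_RCOSETS_def')
  define Mp where "Mp p = {f \<in> baire_one. f p = 0}" for p
  have B: "fixed_ideal M \<longleftrightarrow> (\<exists>p. M = Mp p)"
  proof
    assume "fixed_ideal M"
    then obtain p where p: "\<And>f. f \<in> M \<Longrightarrow> f p = 0"
      unfolding fixed_ideal_def zero_set_def by blast
    have id: "ideal (Mp p) B1"
    proof (rule idealI)
      show "ring B1" by (rule ring_axioms)
      show "subgroup (Mp p) (add_monoid B1)"
      proof (rule subgroup.intro)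
        show "Mp p \<subseteq> carrier (add_monoid B1)" by (auto simp: Mp_def)
        show "\<And>x y. x \<in> Mp p \<Longrightarrow> y \<in> Mp p \<Longrightarrow> x \<otimes>\<^bsub>add_monoid B1\<^esub> y \<in> Mp p"
          by (auto simp: Mp_def add_b1)
        show "\<one>\<^bsub>add_monoid B1\<^esub> \<in> Mp p" by (auto simp: Mp_def const_b1)
        fix x assume x: "x \<in> Mp p"
        have "inv\<^bsub>add_monoid B1\<^esub> x = (\<lambda>t. - x t)"
        proof -
          have xc: "x \<in> carrier B1" using x by (simp add: Mp_def)
          have "\<ominus>\<^bsub>B1\<^esub> x \<oplus>\<^bsub>B1\<^esub> x = \<zero>\<^bsub>B1\<^esub>" by (rule l_neg[OF xc])
          then have "\<And>t. (\<ominus>\<^bsub>B1\<^esub> x) t + x t = 0" by (simp add: fun_eq_iff)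
          then have "\<ominus>\<^bsub>B1\<^esub> x = (\<lambda>t. - x t)" by (simp add: fun_eq_iff eq_neg_iff_add_eq_0)
          then show ?thesis by (simp add: a_inv_def)
        qed
        then show "inv\<^bsub>add_monoid B1\<^esub> x \<in> Mp p" using x by (simp add: Mp_def neg_b1)
      qed
      show "\<And>a x. a \<in> Mp p \<Longrightarrow> x \<in> carrier B1 \<Longrightarrow> x \<otimes>\<^bsub>B1\<^esub> a \<in> Mp p"
        by (auto simp: Mp_def mult_b1)
      show "\<And>a x. a \<in> Mp p \<Longrightarrow> x \<in> carrier B1 \<Longrightarrow> a \<otimes>\<^bsub>B1\<^esub> x \<in> Mp p"
        by (auto simp: Mp_def mult_b1)
    qed
    have "M \<subseteq> Mp p" using Msub p by (auto simp: Mp_def)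
    moreover have "Mp p \<subseteq> carrier B1" by (auto simp: Mp_def)
    moreover have "Mp p \<noteq> carrier B1" using const_b1[of 1] by (auto simp: Mp_def)
    ultimately have "Mp p = M" using I_maximal[OF id] by blast
    then show "\<exists>p. M = Mp p" by auto
  next
    assume "\<exists>p. M = Mp p"
    then obtain p where "M = Mp p" by blast
    then have "p \<in> (\<Inter>f\<in>M. zero_set f)" by (auto simp: Mp_def zero_set_def)
    then show "fixed_ideal M" unfolding fixed_ideal_def by blast
  qed
  have A1: "real_ideal M" if "M = Mp p" for p
  proof -
    have "Phi M ` UNIV \<subseteq> carrier (B1 Quot M)"
      unfolding quot Phi_def using const_b1 by blast
    moreover have "carrier (B1 Quot M) \<subseteq> Phi M ` UNIV"
    proof
      fix C assume "C \<in> carrier (B1 Quot M)"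
      then obtain a where a: "a \<in> baire_one" "C = M +>\<^bsub>B1\<^esub> a" unfolding quot by blast
      have "M +>\<^bsub>B1\<^esub> a = M +>\<^bsub>B1\<^esub> (\<lambda>x. a p)"
      proof -
        have "(\<lambda>x. h x + a x) \<in> (\<Union>h\<in>M. {\<lambda>x. h x + a p})" if "h \<in> M" for h
        proof -
          have "(\<lambda>x. h x + a x + - a p) \<in> M"
            using that a(1) add_b1[OF add_b1[of h a] const_b1[of "- a p"]]
            unfolding \<open>M = Mp p\<close> Mp_def by auto
          then show ?thesis by (intro UN_I[of "\<lambda>x. h x + a x + - a p"]) auto
        qed
        moreover have "(\<lambda>x. h x + a p) \<in> (\<Union>h\<in>M. {\<lambda>x. h x + a x})" if "h \<in> M" for h
        proof -
          have "(\<lambda>x. h x + a p + - a x) \<in> M"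
            using that a(1) add_b1[OF add_b1[OF _ const_b1[of "a p"]] neg_b1[of a], of h]
            unfolding \<open>M = Mp p\<close> Mp_def by auto
          then show ?thesis by (intro UN_I[of "\<lambda>x. h x + a p + - a x"]) auto
        qed
        ultimately show ?thesis unfolding cos by blast
      qed
      then show "C \<in> Phi M ` UNIV" unfolding Phi_def a(2) by blast
    qed
    ultimately show ?thesis unfolding real_ideal_def by blast
  qed
  have A2: "fixed_ideal M" if "real_ideal M"
  proof (rule ccontr)
    assume nf: "\<not> fixed_ideal M"
    have "M +>\<^bsub>B1\<^esub> (\<lambda>x. x) \<in> Phi M ` UNIV"
      using that id_b1 unfolding real_ideal_def quot by blast
    then obtain r where r: "M +>\<^bsub>B1\<^esub> (\<lambda>x. x) = M +>\<^bsub>B1\<^esub> (\<lambda>x. r)"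
      unfolding Phi_def by blast
    have "(\<lambda>x. x) \<in> M +>\<^bsub>B1\<^esub> (\<lambda>x. x)" unfolding cos using zM by force
    then obtain h where h: "h \<in> M" "(\<lambda>x. x) = (\<lambda>x. h x + r)" unfolding r cos by blast
    then have hx: "\<And>x. h x = x - r" by (metis add_diff_cancel_right')
    from nf obtain f where f: "f \<in> M" "f r \<noteq> 0"
      unfolding fixed_ideal_def zero_set_def by blast
    define H where "H = (\<lambda>t. h t * h t + f t * f t)"
    have HM: "H \<in> M" unfolding H_def using h(1) f(1) Msub by (intro Mac Mlc) auto
    have Hnz: "H x \<noteq> 0" for x
    proof (cases "x = r")
      case True then show ?thesis using f(2) hx by (simp add: H_def)
    next
      case False
      have "h x * h x > 0" using hx[of x] False by (metis not_real_square_gt_zero right_minus_eq)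
      moreover have "f x * f x \<ge> 0" by simp
      ultimately show ?thesis unfolding H_def by linarith
    qed
    have "(\<lambda>t. 1 / H t * H t) \<in> M"
      using Mlc[OF HM inv_b1] HM Msub Hnz by blast
    moreover have "(\<lambda>t. 1 / H t * H t) = (\<lambda>t. 1)" using Hnz by auto
    ultimately show False using notone by simp
  qed
  show ?thesis using A1 A2 B unfolding Mp_def by blast
qed

end
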